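(* Let $\psi,\phi\in\mathbf{\Psi}_n$, and $\bar\phi(t):=\phi(t_1,\ldots,t_{n-1},0)$ for $t:=(t_1,\ldots,t_{n-1})\in\Omega_{n-1}$. Then there exists a $\kappa>0$ such that $$\max\{|\!|\!|(x_1,\ldots,x_{n-1})|\!|\!|_{\bar\phi},\ |\!|\!|(x_n,\ldots,x_{n})|\!|\!|_{\bar\phi},\ \|x_n\|\}\le \kappa\cdot|\!|\!|x|\!|\!|_\psi$$ for all $x:=(x_1,\ldots,x_n)\in X^n$.
   Context: Let $(X,\|\cdot\|)$ be a normed vector space, $n\ge2$. $\Omega_k:=\{t\in\mathbb{R}^k\mid t_i\ge0,\ \sum_i t_i=1\}$, $\Omega_k^\circ:=\{t\in\Omega_k\mid t_i<1\ \forall i\}$. $\mathbf{\Psi}_k$ is the class of convex continuous $\psi:\Omega_k\to\mathbb{R}$ with (B1) $\psi(\mathbf{e}_i)=1$ for all standard unit vectors $\mathbf{e}_i$ and (B2) $\psi(t)\ge(1-t_i)\psi\big(\frac{t_1}{1-t_i},\ldots,\frac{t_{i-1}}{1-t_i},0,\frac{t_{i+1}}{1-t_i},\ldots,\frac{t_k}{1-t_i}\big)$ for all $t\in\Omega_k^\circ$, $i=1,\ldots,k$. For $\psi\in\mathbf{\Psi}_k$, $|\!|\!|x|\!|\!|_\psi:=\big(\sum_{i}\|x_i\|\big)\,\psi\big(\frac{\|x_1\|}{\sum_{i}\|x_i\|},\ldots,\frac{\|x_k\|}{\sum_{i}\|x_i\|}\big)$ for $0\ne x\in X^k$, $|\!|\!|0|\!|\!|_\psi:=0$.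 One has $\bar\phi\in\mathbf{\Psi}_{n-1}$; in $|\!|\!|(x_n,\ldots,x_n)|\!|\!|_{\bar\phi}$ the vector $x_n$ is repeated $n-1$ times. *)

theory Defs
  imports "HOL-Analysis.Analysis"
begin

(* Points of R^k are represented as functions nat => real, with coordinates
   indexed 0..k-1 (paper's t_1..t_k), and required to vanish at indices >= k. *)

definition Omega :: "nat \<Rightarrow> (nat \<Rightarrow> real) set" where
  "Omega k = {t. (\<forall>i<k. 0 \<le> t i) \<and> (\<Sum>i<k. t i) = 1 \<and> (\<forall>i\<ge>k. t i = 0)}"

definition Omega_int :: "nat \<Rightarrow> (nat \<Rightarrow> real) set" where
  "Omega_int k = {t \<in> Omega k. \<forall>i<k. t i < 1}"

definition unitv :: "nat \<Rightarrow> nat \<Rightarrow> real" where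
  "unitv i = (\<lambda>j. if j = i then 1 else 0)"

(* convexity on the Omega, written out (functions nat => real carry no vector-space instance) *)
definition convex_on_Omega :: "nat \<Rightarrow> ((nat \<Rightarrow> real) \<Rightarrow> real) \<Rightarrow> bool" where
  "convex_on_Omega k \<psi> \<longleftrightarrow>
     (\<forall>s\<in>Omega k. \<forall>t\<in>Omega k. \<forall>a::real. 0 \<le> a \<and> a \<le> 1 \<longrightarrow>
        \<psi> (\<lambda>i. a * s i + (1 - a) * t i) \<le> a * \<psi> s + (1 - a) * \<psi> t)"

definition Psi :: "nat \<Rightarrow> ((nat \<Rightarrow> real) \<Rightarrow> real) set" where
  "Psi k = {\<psi>. convex_on_Omega k \<psi> \<and> continuous_on (Omega k) \<psi>
      \<and> (\<forall>i<k. \<psi> (unitv i) = 1)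
      \<and> (\<forall>t\<in>Omega_int k. \<forall>i<k.
            \<psi> t \<ge> (1 - t i) * \<psi> (\<lambda>j. if j = i then 0 else t j / (1 - t i)))}"

(* |||(x_1,...,x_k)|||_psi, x given as nat => 'a using indices 0..k-1 *)
definition psi_norm :: "nat \<Rightarrow> ((nat \<Rightarrow> real) \<Rightarrow> real) \<Rightarrow> (nat \<Rightarrow> 'a::real_normed_vector) \<Rightarrow> real" where
  "psi_norm k \<psi> x =
     (let s = (\<Sum>i<k. norm (x i)) in
      if s = 0 then 0 else s * \<psi> (\<lambda>i. if i < k then norm (x i) / s else 0))"

definition phibar :: "nat \<Rightarrow> ((nat \<Rightarrow> real) \<Rightarrow> real) \<Rightarrow> (nat \<Rightarrow> real) \<Rightarrow> real" where
  "phibar n \<phi> = (\<lambda>t. \<phi> (\<lambda>i. if i < n - 1 then t i else 0))"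

end

theory Submission
  imports Defs
begin

definition supp :: "nat \<Rightarrow> (nat \<Rightarrow> real) \<Rightarrow> nat set" where
  "supp n t = {i. i < n \<and> t i \<noteq> 0}"

lemma supp_finite[simp]: "finite (supp n t)"
  unfolding supp_def by auto

lemma Omega_sum_supp:
  assumes "t \<in> Omega n" shows "(\<Sum>i\<in>supp n t. t i) = 1"
proof -
  have "(\<Sum>i\<in>supp n t. t i) = (\<Sum>i<n. t i)"
    by (rule sum.mono_neutral_left) (auto simp: supp_def)
  thus ?thesis using assms by (simp add: Omega_def)
qed

lemma unit_case:
  assumes "t \<in> Omega n" "card (supp n t) = 1"
  shows "\<exists>j<n. t = unitv j"
proof -
  obtain j where j: "supp n t = {j}" using assms(2) card_1_singletonE by blast
  have "j < n" using j by (auto simp: supp_def)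
  have "t j = 1" using Omega_sum_supp[OF assms(1)] j by simp
  have "t = unitv j"
  proof
    fix i show "t i = unitv j i"
    proof (cases "i = j")
      case True thus ?thesis using \<open>t j = 1\<close> by (simp add: unitv_def)
    next
      case False
      show ?thesis
      proof (cases "i < n")
        case True
        then have "t i = 0" using j False by (auto simp: supp_def)
        thus ?thesis using False by (simp add: unitv_def)
      next
        case False
        thus ?thesis using assms(1) \<open>i \<noteq> j\<close> by (simp add: Omega_def unitv_def)
      qed
    qed
  qed
  thus ?thesis using \<open>j < n\<close> by blast
qed

lemma unitv_Omega: "i < n \<Longrightarrow> unitv i \<in> Omega n"
proof -
  assume "i < n"
  have "(\<Sum>j<n. unitv i j) = 1"
    using \<open>i < n\<close> by (simp add: unitv_def)
  thus ?thesis using \<open>i < n\<close> by (auto simp: Omega_def unitv_def)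
qed

lemma lt1:
  assumes "t \<in> Omega n" "card (supp n t) \<ge> 2" "i \<in> supp n t"
  shows "t i < 1"
proof -
  obtain j where j: "j \<in> supp n t" "j \<noteq> i"
  proof -
    have "supp n t - {i} \<noteq> {}"
    proof
      assume "supp n t - {i} = {}"
      then have "supp n t \<subseteq> {i}" by auto
      then have "card (supp n t) \<le> card {i}" by (intro card_mono) auto
      thus False using assms(2) by simp
    qed
    thus ?thesis using that by blast
  qed
  have nn: "\<And>k. k \<in> supp n t \<Longrightarrow> 0 \<le> t k" using assms(1) by (auto simp: Omega_def supp_def)
  have "t j > 0" using nn[OF j(1)] j(1) by (auto simp: supp_def)
  have "(\<Sum>k\<in>{i,j}. t k) \<le> (\<Sum>k\<in>supp n t. t k)"
    by (rule sum_mono2) (use j assms(3) nn in auto)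
  then have "t i + t j \<le> 1" using Omega_sum_supp[OF assms(1)] j by simp
  thus ?thesis using \<open>t j > 0\<close> by simp
qed

definition red :: "(nat \<Rightarrow> real) \<Rightarrow> nat \<Rightarrow> nat \<Rightarrow> real" where
  "red t i = (\<lambda>j. if j = i then 0 else t j / (1 - t i))"

lemma red_props:
  assumes "t \<in> Omega n" "i \<in> supp n t" "t i < 1"
  shows "red t i \<in> Omega n" "supp n (red t i) = supp n t - {i}"
proof -
  have pos: "1 - t i > 0" using assms(3) by simp
  have "(\<Sum>j<n. red t i j) = (\<Sum>j\<in>{..<n} - {i}. t j / (1 - t i))"
    by (rule sum.mono_neutral_cong_right) (auto simp: red_def)
  also have "\<dots> = (\<Sum>j\<in>{..<n} - {i}. t j) / (1 - t i)"
    by (simp add: sum_divide_distrib)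
  also have "(\<Sum>j\<in>{..<n} - {i}. t j) = (\<Sum>j<n. t j) - t i"
    using assms(2) by (subst sum_diff1) (auto simp: supp_def)
  also have "\<dots> = 1 - t i" using assms(1) by (simp add: Omega_def)
  finally have s: "(\<Sum>j<n. red t i j) = 1" using pos by simp
  show "red t i \<in> Omega n"
    using assms(1) s pos by (auto simp: Omega_def red_def)
  show "supp n (red t i) = supp n t - {i}"
    using pos by (auto simp: supp_def red_def)
qed

lemma card_red:
  assumes "t \<in> Omega n" "i \<in> supp n t" "t i < 1"
  shows "card (supp n (red t i)) = card (supp n t) - 1"
  using red_props[OF assms] assms(2) by simp

lemma supp_nonempty: "t \<in> Omega n \<Longrightarrow> supp n t \<noteq> {}"
  using Omega_sum_supp by fastforce

lemma upper_aux:
  assumes "\<phi> \<in> Psi n"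
  shows "\<forall>t. t \<in> Omega n \<longrightarrow> card (supp n t) = k \<longrightarrow> \<phi> t \<le> 1"
proof (induction k)
  case 0
  then show ?case using supp_nonempty by auto
next
  case (Suc k)
  show ?case
  proof (intro allI impI)
    fix t assume t: "t \<in> Omega n" "card (supp n t) = Suc k"
    show "\<phi> t \<le> 1"
    proof (cases "k = 0")
      case True
      then obtain j where "j < n" "t = unitv j" using unit_case t by auto
      thus ?thesis using assms by (simp add: Psi_def)
    next
      case False
      obtain i where i: "i \<in> supp n t" using supp_nonempty[OF t(1)] by blast
      have ti: "t i < 1" using lt1[OF t(1) _ i] t(2) False by simp
      have tpos: "0 \<le> t i" using t(1) i by (auto simp: Omega_def supp_def)
      have s: "red t i \<in> Omega n" "card (supp n (red t i)) = k"
        using red_props(1)[OF t(1) i ti] card_red[OF t(1) i ti] t(2) by auto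
      have "i < n" using i by (simp add: supp_def)
      have eq: "(\<lambda>j. t i * unitv i j + (1 - t i) * red t i j) = t"
        using ti by (auto simp: unitv_def red_def)
      have cv: "convex_on_Omega n \<phi>" and u: "\<phi> (unitv i) = 1"
        using assms \<open>i < n\<close> by (auto simp: Psi_def)
      have "\<phi> (\<lambda>j. t i * unitv i j + (1 - t i) * red t i j) \<le> t i * \<phi> (unitv i) + (1 - t i) * \<phi> (red t i)"
        using cv unitv_Omega[OF \<open>i < n\<close>] s(1) tpos ti
        unfolding convex_on_Omega_def by simp
      hence "\<phi> t \<le> t i * \<phi> (unitv i) + (1 - t i) * \<phi> (red t i)" by (simp only: eq)
      also have "\<dots> \<le> t i * 1 + (1 - t i) * 1"
        using Suc.IH s u ti tpos by (intro add_mono mult_left_mono) auto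
      finally show ?thesis by simp
    qed
  qed
qed

lemma upper: "\<phi> \<in> Psi n \<Longrightarrow> t \<in> Omega n \<Longrightarrow> \<phi> t \<le> 1"
  using upper_aux by blast

lemma lower_aux:
  assumes "\<psi> \<in> Psi n"
  shows "\<forall>t j. t \<in> Omega n \<longrightarrow> card (supp n t) = k \<longrightarrow> j < n \<longrightarrow> t j \<le> \<psi> t"
proof (induction k)
  case 0
  then show ?case using supp_nonempty by auto
next
  case (Suc k)
  show ?case
  proof (intro allI impI)
    fix t j assume t: "t \<in> Omega n" "card (supp n t) = Suc k" and j: "j < n"
    show "t j \<le> \<psi> t"
    proof (cases "k = 0")
      case True
      then obtain l where "l < n" "t = unitv l" using unit_case t by auto
      thus ?thesis using assms by (simp add: Psi_def unitv_def)
    next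
      case False
      have "supp n t - {j} \<noteq> {}"
      proof
        assume "supp n t - {j} = {}"
        then have "supp n t \<subseteq> {j}" by auto
        then have "card (supp n t) \<le> card {j}" by (intro card_mono) auto
        thus False using t(2) False by simp
      qed
      then obtain i where i: "i \<in> supp n t" "i \<noteq> j" by blast
      have ti: "t i < 1" using lt1[OF t(1) _ i(1)] t(2) False by simp
      have s: "red t i \<in> Omega n" "card (supp n (red t i)) = k"
        using red_props(1)[OF t(1) i(1) ti] card_red[OF t(1) i(1) ti] t(2) by auto
      have "i < n" using i by (simp add: supp_def)
      have tint: "t \<in> Omega_int n"
      proof -
        have "\<forall>l<n. t l < 1"
        proof (intro allI impI)
          fix l assume "l < n"
          show "t l < 1"
          proof (cases "t l = 0")
            case False
            thus ?thesis using lt1[OF t(1), of l] t(2) \<open>k \<noteq> 0\<close> \<open>l < n\<close> by (simp add: supp_def)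
          qed simp
        qed
        thus ?thesis unfolding Omega_int_def using t(1) by simp
      qed
      have B2: "\<psi> t \<ge> (1 - t i) * \<psi> (red t i)"
        using assms tint \<open>i < n\<close> unfolding Psi_def red_def by blast
      have "red t i j \<le> \<psi> (red t i)" using Suc.IH s j by blast
      hence "(1 - t i) * red t i j \<le> (1 - t i) * \<psi> (red t i)"
        using ti by (intro mult_left_mono) auto
      moreover have "(1 - t i) * red t i j = t j" using ti i by (simp add: red_def)
      ultimately show ?thesis using B2 by simp
    qed
  qed
qed

lemma lower: "\<psi> \<in> Psi n \<Longrightarrow> t \<in> Omega n \<Longrightarrow> j < n \<Longrightarrow> t j \<le> \<psi> t"
  using lower_aux by blast

lemma lower2:
  assumes "\<psi> \<in> Psi n" "t \<in> Omega n" "n > 0"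
  shows "1 / real n \<le> \<psi> t"
proof -
  obtain j where j: "j < n" "t j \<ge> 1 / real n"
  proof (rule ccontr)
    assume "\<not> thesis"
    with that have h: "\<forall>j<n. t j < 1 / real n" by force
    have "(\<Sum>j<n. t j) < (\<Sum>j<n. 1 / real n)"
      using h assms(3) by (intro sum_strict_mono) auto
    thus False using assms(2,3) by (simp add: Omega_def)
  qed
  thus ?thesis using lower[OF assms(1,2) j(1)] by simp
qed

theorem proposition5p5:
  fixes n :: nat and \<psi> \<phi> :: "(nat \<Rightarrow> real) \<Rightarrow> real"
  assumes "2 \<le> n" and "\<psi> \<in> Psi n" and "\<phi> \<in> Psi n"
  shows "\<exists>\<kappa>>0. \<forall>x :: nat \<Rightarrow> 'a::real_normed_vector.
           max (max (psi_norm (n - 1) (phibar n \<phi>) x)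
                    (psi_norm (n - 1) (phibar n \<phi>) (\<lambda>_. x (n - 1))))
               (norm (x (n - 1)))
           \<le> \<kappa> * psi_norm n \<psi> x"
proof -
  define \<kappa> where "\<kappa> = real n * (real n - 1)"
  have n0: "n > 0" "real n \<ge> 2" using assms(1) by auto
  have kpos: "\<kappa> > 0" using n0 unfolding \<kappa>_def by simp
  show ?thesis
  proof (intro exI[of _ \<kappa>] conjI allI kpos)
    fix x :: "nat \<Rightarrow> 'a"
    define S where "S = (\<Sum>i<n. norm (x i))"
    define S1 where "S1 = (\<Sum>i<n - 1. norm (x i))"
    have S_split: "S = S1 + norm (x (n - 1))"
      unfolding S_def S1_def using n0
      by (metis Suc_diff_1 sum.lessThan_Suc)
    have S1nn: "S1 \<ge> 0" unfolding S1_def by (simp add: sum_nonneg)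
    have Snn: "S \<ge> 0" unfolding S_def by (simp add: sum_nonneg)
    have T1: "psi_norm (n - 1) (phibar n \<phi>) x \<le> S1"
    proof (cases "S1 = 0")
      case True thus ?thesis unfolding psi_norm_def Let_def S1_def[symmetric] by simp
    next
      case False
      hence S1p: "S1 > 0" using S1nn by simp
      define u where "u = (\<lambda>i. if i < n - 1 then norm (x i) / S1 else 0)"
      have "(\<Sum>i<n. u i) = (\<Sum>i<n - 1. norm (x i) / S1)"
        by (rule sum.mono_neutral_cong_right) (auto simp: u_def)
      also have "\<dots> = 1" using S1p unfolding sum_divide_distrib[symmetric] S1_def[symmetric] by simp
      finally have "u \<in> Omega n" using S1p by (auto simp: Omega_def u_def)
      hence "\<phi> u \<le> 1" using upper assms(3) by blast
      hence "S1 * \<phi> u \<le> S1" using S1p by (simp add: mult_left_le)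
      thus ?thesis using False
        unfolding psi_norm_def Let_def S1_def[symmetric] phibar_def by (simp add: u_def cong: if_cong)
    qed
    have T2: "psi_norm (n - 1) (phibar n \<phi>) (\<lambda>_. x (n - 1)) \<le> (real n - 1) * norm (x (n - 1))"
    proof -
      define S2 where "S2 = (\<Sum>i<n - 1. norm (x (n - 1)))"
      have S2e: "S2 = (real n - 1) * norm (x (n - 1))" unfolding S2_def using n0 by (simp add: of_nat_diff)
      show ?thesis
      proof (cases "S2 = 0")
        case True thus ?thesis using S2e n0 unfolding psi_norm_def Let_def S2_def[symmetric] by simp
      next
        case False
        hence S2p: "S2 > 0" using S2e n0 by (simp add: less_le)
        define u where "u = (\<lambda>i. if i < n - 1 then norm (x (n - 1)) / S2 else 0)"
        have "(\<Sum>i<n. u i) = (\<Sum>i<n - 1. norm (x (n - 1)) / S2)"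
          by (rule sum.mono_neutral_cong_right) (auto simp: u_def)
        also have "\<dots> = 1" using S2p unfolding sum_divide_distrib[symmetric] S2_def[symmetric] by simp
        finally have "u \<in> Omega n" using S2p by (auto simp: Omega_def u_def)
        hence "\<phi> u \<le> 1" using upper assms(3) by blast
        hence "S2 * \<phi> u \<le> S2" using S2p by (simp add: mult_left_le)
        thus ?thesis using False S2e
          unfolding psi_norm_def Let_def S2_def[symmetric] phibar_def by (simp add: u_def cong: if_cong)
      qed
    qed
    have R: "S / real n \<le> psi_norm n \<psi> x"
    proof (cases "S = 0")
      case True thus ?thesis unfolding psi_norm_def Let_def S_def[symmetric] by simp
    next
      case False
      hence Sp: "S > 0" using Snn by simp
      define t where "t = (\<lambda>i. if i < n then norm (x i) / S else 0)"
      have "(\<Sum>i<n. t i) = 1" using Sp by (simp add: t_def sum_divide_distrib[symmetric] S_def[symmetric])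
      hence "t \<in> Omega n" using Sp by (auto simp: Omega_def t_def)
      hence "1 / real n \<le> \<psi> t" using lower2 assms(2) n0 by blast
      hence "S * (1 / real n) \<le> S * \<psi> t" using Sp by (intro mult_left_mono) auto
      thus ?thesis using False unfolding psi_norm_def Let_def S_def[symmetric] by (simp add: t_def)
    qed
    have SS: "1 * S \<le> (real n - 1) * S" using n0 Snn by (intro mult_right_mono) auto
    have a: "S1 \<le> (real n - 1) * S" using S_split SS norm_ge_zero[of "x (n - 1)"] by linarith
    have b: "(real n - 1) * norm (x (n - 1)) \<le> (real n - 1) * S"
      using S_split S1nn n0 by (intro mult_left_mono) auto
    have c: "norm (x (n - 1)) \<le> (real n - 1) * S" using S_split SS S1nn by linarith
    have "(real n - 1) * S = \<kappa> * (S / real n)" unfolding \<kappa>_def using n0 by simp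
    also have "\<dots> \<le> \<kappa> * psi_norm n \<psi> x" using R kpos by (intro mult_left_mono) auto
    finally show "max (max (psi_norm (n - 1) (phibar n \<phi>) x)
                    (psi_norm (n - 1) (phibar n \<phi>) (\<lambda>_. x (n - 1))))
               (norm (x (n - 1))) \<le> \<kappa> * psi_norm n \<psi> x"
      using T1 T2 a b c by simp
  qed
qed

end
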